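(* Let $A\subseteq\mathbf{M}$ be finite, $X=\mathrm{gcl}(A)$ with the induced graph structure, and $g\in\mathrm{Aut}(X)$. Then there is $\gamma\in\mathrm{Aut}(\mathbf{M})$ with $\gamma\restriction X=g$.
   Context: Fix $\mathfrak{m}\ge2$. Graphs, $\delta(A)=\mathfrak{m}|A|-|\mathcal{R}(A)|$ ($\mathcal{R}(A)$ the edge set), $A\leqslant B$ iff $\delta(A')\ge\delta(A)$ for all $A\subseteq A'\subseteq B$ (for infinite $N$: $A\leqslant B$ for all finite $B\subseteq N$ containing $A$). $\mathsf{K_0}$ = finite graphs all of whose subgraphs have $\delta\ge0$. $\mathbf{M}$ is the $(\mathsf{K_0},\leqslant)$-generic: unique countable graph that is a union of a chain of finite $\leqslant$-closed subsets, in which isomorphisms between finite $\leqslant$-closed subsets extend to automorphisms, and into which every member of $\mathsf{K_0}$ embeds $\leqslant$-closedly. $\mathrm{cl}(A)$ is the smallest finite $\leqslant$-closed subset of $\mathbf{M}$ containing finite $A$; $\mathrm{d}(A)=\delta(\mathrm{cl}(A))$; $\mathrm{d}(m/A)=\mathrm{d}(\{m\}\cup A)-\mathrm{d}(A)$; $\mathrm{gcl}(X)=\{m\in\mathbf{M}:\mathrm{d}(m/A)=0$ for some finite $A\subseteq X\}$. *)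

theory Defs
  imports Main "HOL-Library.Countable_Set"
begin

text \<open>Graphs are given by a vertex set and an edge relation E (symmetric, irreflexive on the
vertex set). The parameter mm is the fixed natural number \<open>m \<ge> 2\<close>.\<close>

definition graph_on :: "'a set \<Rightarrow> ('a \<Rightarrow> 'a \<Rightarrow> bool) \<Rightarrow> bool" where
  "graph_on V E \<longleftrightarrow> (\<forall>x\<in>V. \<forall>y\<in>V. E x y \<longrightarrow> E y x) \<and> (\<forall>x\<in>V. \<not> E x x)"

definition edges :: "('a \<Rightarrow> 'a \<Rightarrow> bool) \<Rightarrow> 'a set \<Rightarrow> 'a set set" where
  "edges E A = {{x, y} | x y. x \<in> A \<and> y \<in> A \<and> E x y}"

definition delta :: "nat \<Rightarrow> ('a \<Rightarrow> 'a \<Rightarrow> bool) \<Rightarrow> 'a set \<Rightarrow> int" where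
  "delta mm E A = int mm * int (card A) - int (card (edges E A))"

text \<open>For finite N this is the definition for finite graphs; for infinite N it is equivalent
  to A \<le> B for all finite B between A and N.\<close>
definition le_closed :: "nat \<Rightarrow> ('a \<Rightarrow> 'a \<Rightarrow> bool) \<Rightarrow> 'a set \<Rightarrow> 'a set \<Rightarrow> bool" where
  "le_closed mm E A N \<longleftrightarrow> A \<subseteq> N \<and>
     (\<forall>A'. A \<subseteq> A' \<and> A' \<subseteq> N \<and> finite A' \<longrightarrow> delta mm E A' \<ge> delta mm E A)"

definition in_K0 :: "nat \<Rightarrow> 'b set \<Rightarrow> ('b \<Rightarrow> 'b \<Rightarrow> bool) \<Rightarrow> bool" where
  "in_K0 mm V E \<longleftrightarrow> finite V \<and> graph_on V E \<and> (\<forall>A\<subseteq>V. delta mm E A \<ge> 0)"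

definition partial_iso :: "('a \<Rightarrow> 'a \<Rightarrow> bool) \<Rightarrow> ('b \<Rightarrow> 'b \<Rightarrow> bool) \<Rightarrow> ('a \<Rightarrow> 'b) \<Rightarrow> 'a set \<Rightarrow> 'b set \<Rightarrow> bool" where
  "partial_iso E F f A B \<longleftrightarrow> bij_betw f A B \<and> (\<forall>x\<in>A. \<forall>y\<in>A. E x y \<longleftrightarrow> F (f x) (f y))"

definition automorphism :: "('a \<Rightarrow> 'a \<Rightarrow> bool) \<Rightarrow> 'a set \<Rightarrow> ('a \<Rightarrow> 'a) \<Rightarrow> bool" where
  "automorphism E X g \<longleftrightarrow> partial_iso E E g X X"

definition generic :: "nat \<Rightarrow> 'a set \<Rightarrow> ('a \<Rightarrow> 'a \<Rightarrow> bool) \<Rightarrow> bool" where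
  "generic mm M E \<longleftrightarrow>
     countable M \<and> graph_on M E \<and>
     (\<exists>\<C>. Complete_Partial_Order.chain (\<subseteq>) \<C> \<and> \<Union>\<C> = M \<and>
          (\<forall>C\<in>\<C>. finite C \<and> le_closed mm E C M)) \<and>
     (\<forall>A B f. finite A \<and> finite B \<and> le_closed mm E A M \<and> le_closed mm E B M \<and>
          partial_iso E E f A B \<longrightarrow> (\<exists>\<sigma>. automorphism E M \<sigma> \<and> (\<forall>x\<in>A. \<sigma> x = f x))) \<and>
     (\<forall>(V :: nat set) F. in_K0 mm V F \<longrightarrow>
          (\<exists>f. partial_iso F E f V (f ` V) \<and> f ` V \<subseteq> M \<and> le_closed mm E (f ` V) M))"

definition cl :: "nat \<Rightarrow> 'a set \<Rightarrow> ('a \<Rightarrow> 'a \<Rightarrow> bool) \<Rightarrow> 'a set \<Rightarrow> 'a set" where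
  "cl mm M E A = \<Inter>{B. finite B \<and> A \<subseteq> B \<and> le_closed mm E B M}"

definition dd :: "nat \<Rightarrow> 'a set \<Rightarrow> ('a \<Rightarrow> 'a \<Rightarrow> bool) \<Rightarrow> 'a set \<Rightarrow> int" where
  "dd mm M E A = delta mm E (cl mm M E A)"

definition dd_rel :: "nat \<Rightarrow> 'a set \<Rightarrow> ('a \<Rightarrow> 'a \<Rightarrow> bool) \<Rightarrow> 'a \<Rightarrow> 'a set \<Rightarrow> int" where
  "dd_rel mm M E x A = dd mm M E (insert x A) - dd mm M E A"

definition gcl :: "nat \<Rightarrow> 'a set \<Rightarrow> ('a \<Rightarrow> 'a \<Rightarrow> bool) \<Rightarrow> 'a set \<Rightarrow> 'a set" where
  "gcl mm M E X = {x \<in> M. \<exists>A. A \<subseteq> X \<and> finite A \<and> dd_rel mm M E x A = 0}"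

end

theory Submission
  imports Defs
begin

lemma edges_sub: "e \<in> edges E S \<Longrightarrow> e \<subseteq> S"
  by (auto simp: edges_def)

lemma edges_mono: "P \<subseteq> Q \<Longrightarrow> edges E P \<subseteq> edges E Q"
  by (auto simp: edges_def)

lemma finite_edges: "finite S \<Longrightarrow> finite (edges E S)"
proof -
  assume "finite S"
  have "edges E S \<subseteq> Pow S" by (auto simp: edges_def)
  thus ?thesis using \<open>finite S\<close> finite_subset by blast
qed

lemma edges_Int: "edges E P \<inter> edges E Q = edges E (P \<inter> Q)"
proof
  show "edges E P \<inter> edges E Q \<subseteq> edges E (P \<inter> Q)"
  proof
    fix e assume e: "e \<in> edges E P \<inter> edges E Q"
    then obtain x y where "e = {x,y}" "x \<in> P" "y \<in> P" "E x y" by (auto simp: edges_def)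
    moreover have "e \<subseteq> Q" using e edges_sub by blast
    ultimately show "e \<in> edges E (P \<inter> Q)" by (auto simp: edges_def)
  qed
qed (auto simp: edges_def)

lemma delta_Un:
  assumes "finite P" "finite Q"
  shows "delta mm E (P \<union> Q) + delta mm E (P \<inter> Q) + int (card (edges E (P \<union> Q) - (edges E P \<union> edges E Q)))
     = delta mm E P + delta mm E Q"
proof -
  have fU: "finite (edges E (P \<union> Q))" using assms finite_edges by blast
  have sub: "edges E P \<union> edges E Q \<subseteq> edges E (P \<union> Q)" using edges_mono by (metis Un_upper1 Un_upper2 Un_least)
  have c1: "card (edges E (P \<union> Q)) = card (edges E P \<union> edges E Q) + card (edges E (P \<union> Q) - (edges E P \<union> edges E Q))"
    using card_Diff_subset[OF finite_subset[OF sub fU] sub] card_mono[OF fU sub] by linarith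
  have c2: "card (edges E P \<union> edges E Q) + card (edges E (P \<inter> Q)) = card (edges E P) + card (edges E Q)"
    using card_Un_Int[OF finite_edges[OF assms(1)] finite_edges[OF assms(2)]] edges_Int[of E P Q] by simp
  have c3: "card (P \<union> Q) + card (P \<inter> Q) = card P + card Q" using card_Un_Int[OF assms] by simp
  show ?thesis unfolding delta_def
  proof -
    have "int mm * int (card (P \<union> Q)) + int mm * int (card (P \<inter> Q)) = int mm * int (card P) + int mm * int (card Q)"
      using c3 by (metis distrib_left of_nat_add)
    thus "int mm * int (card (P \<union> Q)) - int (card (edges E (P \<union> Q))) + (int mm * int (card (P \<inter> Q)) - int (card (edges E (P \<inter> Q)))) +
    int (card (edges E (P \<union> Q) - (edges E P \<union> edges E Q))) =
    int mm * int (card P) - int (card (edges E P)) + (int mm * int (card Q) - int (card (edges E Q)))"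
      using c1 c2 by linarith
  qed
qed

lemma submod:
  assumes "finite P" "finite Q"
  shows "delta mm E (P \<union> Q) + delta mm E (P \<inter> Q) \<le> delta mm E P + delta mm E Q"
  using delta_Un[OF assms, of mm E] by linarith

lemma delta_free:
  assumes "finite P" "finite Q" "\<forall>x\<in>P-Q. \<forall>y\<in>Q-P. \<not> E x y \<and> \<not> E y x"
  shows "delta mm E (P \<union> Q) + delta mm E (P \<inter> Q) = delta mm E P + delta mm E Q"
proof -
  have "edges E (P \<union> Q) - (edges E P \<union> edges E Q) = {}"
  proof (rule ccontr)
    assume "\<not> ?thesis"
    then obtain e where e: "e \<in> edges E (P \<union> Q)" "e \<notin> edges E P" "e \<notin> edges E Q" by blast
    then obtain x y where xy: "e = {x,y}" "x \<in> P \<union> Q" "y \<in> P \<union> Q" "E x y" by (auto simp: edges_def)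
    have "\<not> (x \<in> P \<and> y \<in> P)" using e xy by (auto simp: edges_def)
    moreover have "\<not> (x \<in> Q \<and> y \<in> Q)" using e xy by (auto simp: edges_def)
    ultimately show False using xy assms(3) by blast
  qed
  thus ?thesis using delta_Un[OF assms(1,2), of mm E] by (metis add.right_neutral card.empty of_nat_0)
qed

lemma delta_cross:
  assumes "finite P" "finite Q" "x \<in> P - Q" "y \<in> Q - P" "E x y"
  shows "delta mm E (P \<union> Q) + delta mm E (P \<inter> Q) < delta mm E P + delta mm E Q"
proof -
  have fU: "finite (edges E (P \<union> Q))" using assms finite_edges by blast
  have "{x,y} \<in> edges E (P \<union> Q) - (edges E P \<union> edges E Q)"
    using assms(3,4,5) edges_sub[of "{x,y}" E P] edges_sub[of "{x,y}" E Q] by (auto simp: edges_def)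
  hence "card (edges E (P \<union> Q) - (edges E P \<union> edges E Q)) > 0"
    using fU by (metis card_gt_0_iff empty_iff finite_Diff)
  thus ?thesis using delta_Un[OF assms(1,2), of mm E] by linarith
qed

lemma delta_image:
  assumes "inj_on f S" "\<forall>x\<in>S. \<forall>y\<in>S. E x y \<longleftrightarrow> E (f x) (f y)"
  shows "delta mm E (f ` S) = delta mm E S"
proof -
  have eq: "edges E (f ` S) = (image f) ` edges E S"
  proof
    show "edges E (f ` S) \<subseteq> image f ` edges E S"
    proof
      fix e assume "e \<in> edges E (f ` S)"
      then obtain x y where "e = {f x, f y}" "x \<in> S" "y \<in> S" "E (f x) (f y)" by (auto simp: edges_def)
      hence "{x,y} \<in> edges E S" "e = f ` {x,y}" using assms(2) by (auto simp: edges_def)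
      thus "e \<in> image f ` edges E S" by blast
    qed
  next
    show "image f ` edges E S \<subseteq> edges E (f ` S)"
    proof
      fix e assume "e \<in> image f ` edges E S"
      then obtain x y where "e = f ` {x, y}" "x \<in> S" "y \<in> S" "E x y" by (auto simp: edges_def)
      thus "e \<in> edges E (f ` S)" using assms(2) by (auto simp: edges_def)
    qed
  qed
  have "inj_on (image f) (edges E S)"
    using inj_on_image_Pow[OF assms(1)] edges_sub by (meson PowI inj_on_subset subsetI)
  hence "card (edges E (f ` S)) = card (edges E S)" using eq card_image by metis
  moreover have "card (f ` S) = card S" using card_image[OF assms(1)] .
  ultimately show ?thesis by (simp add: delta_def)
qed


locale gen =
  fixes mm :: nat and M :: "'a set" and E :: "'a \<Rightarrow> 'a \<Rightarrow> bool"
  assumes generic: "generic mm M E"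
begin

abbreviation "\<delta> \<equiv> delta mm E"
abbreviation "closed B \<equiv> le_closed mm E B M"
abbreviation "d \<equiv> dd mm M E"
abbreviation "clo \<equiv> cl mm M E"

lemma symE: "x \<in> M \<Longrightarrow> y \<in> M \<Longrightarrow> E x y \<Longrightarrow> E y x"
  using generic by (auto simp: generic_def graph_on_def)

lemma countM: "countable M"
  using generic by (auto simp: generic_def)

lemma homog0: "\<forall>A B f. finite A \<and> finite B \<and> le_closed mm E A M \<and> le_closed mm E B M \<and>
          partial_iso E E f A B \<longrightarrow> (\<exists>\<sigma>. automorphism E M \<sigma> \<and> (\<forall>x\<in>A. \<sigma> x = f x))"
  using generic unfolding generic_def by (elim conjE)

lemma homog: "finite A \<Longrightarrow> finite B \<Longrightarrow> closed A \<Longrightarrow> closed B \<Longrightarrow> partial_iso E E f A B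
   \<Longrightarrow> \<exists>\<sigma>. automorphism E M \<sigma> \<and> (\<forall>x\<in>A. \<sigma> x = f x)"
  using homog0 by blast

lemma univ: "\<forall>(V :: nat set) F. in_K0 mm V F \<longrightarrow>
          (\<exists>f. partial_iso F E f V (f ` V) \<and> f ` V \<subseteq> M \<and> le_closed mm E (f ` V) M)"
  using generic unfolding generic_def by (elim conjE)

lemma empty_closed: "closed {}"
proof -
  have "in_K0 mm ({}::nat set) (\<lambda>_ _. False)" unfolding in_K0_def graph_on_def delta_def edges_def by auto
  then obtain f :: "nat \<Rightarrow> 'a" where "le_closed mm E (f ` {}) M" using univ by blast
  thus ?thesis by simp
qed

lemma nonneg: "finite S \<Longrightarrow> S \<subseteq> M \<Longrightarrow> \<delta> S \<ge> 0"
  using empty_closed by (auto simp: le_closed_def delta_def edges_def)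

lemma min_exists:
  assumes "finite S" "S \<subseteq> M"
  shows "\<exists>B. finite B \<and> S \<subseteq> B \<and> B \<subseteq> M \<and> (\<forall>B'. finite B' \<and> S \<subseteq> B' \<and> B' \<subseteq> M \<longrightarrow> \<delta> B \<le> \<delta> B')"
proof -
  let ?P = "\<lambda>B. finite B \<and> S \<subseteq> B \<and> B \<subseteq> M"
  have "?P S" using assms by simp
  from ex_has_least_nat[of ?P S "\<lambda>B. nat (\<delta> B)", OF this]
  obtain B where B: "?P B" "\<forall>B'. ?P B' \<longrightarrow> nat (\<delta> B) \<le> nat (\<delta> B')" by blast
  have "\<forall>B'. ?P B' \<longrightarrow> \<delta> B \<le> \<delta> B'"
    using B nonneg by (metis (mono_tags, lifting) nat_le_eq_zle)
  thus ?thesis using B by blast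
qed

lemma closedI:
  assumes "B \<subseteq> M" "\<And>A'. finite A' \<Longrightarrow> B \<subseteq> A' \<Longrightarrow> A' \<subseteq> M \<Longrightarrow> \<delta> B \<le> \<delta> A'"
  shows "closed B"
  using assms by (auto simp: le_closed_def)

lemma closedD: "closed B \<Longrightarrow> finite A' \<Longrightarrow> B \<subseteq> A' \<Longrightarrow> A' \<subseteq> M \<Longrightarrow> \<delta> B \<le> \<delta> A'"
  by (auto simp: le_closed_def)

lemma closed_sub: "closed B \<Longrightarrow> B \<subseteq> M"
  by (auto simp: le_closed_def)

lemma closed_Int:
  assumes "finite B1" "finite B2" "closed B1" "closed B2"
  shows "closed (B1 \<inter> B2)"
proof (rule closedI)
  show "B1 \<inter> B2 \<subseteq> M" using assms closed_sub by blast
  fix A' assume A': "finite A'" "B1 \<inter> B2 \<subseteq> A'" "A' \<subseteq> M"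
  have "\<delta> (A' \<union> B1) + \<delta> (A' \<inter> B1) \<le> \<delta> A' + \<delta> B1" using submod A' assms by blast
  moreover have "\<delta> B1 \<le> \<delta> (A' \<union> B1)" by (rule closedD[OF assms(3)]) (use A' assms closed_sub[OF assms(3)] in auto)
  ultimately have 1: "\<delta> (A' \<inter> B1) \<le> \<delta> A'" by linarith
  have "\<delta> ((A' \<inter> B1) \<union> B2) + \<delta> ((A' \<inter> B1) \<inter> B2) \<le> \<delta> (A' \<inter> B1) + \<delta> B2" using submod A' assms by blast
  moreover have "\<delta> B2 \<le> \<delta> ((A' \<inter> B1) \<union> B2)" by (rule closedD[OF assms(4)]) (use A' assms closed_sub[OF assms(4)] in auto)
  ultimately have h: "\<delta> ((A' \<inter> B1) \<inter> B2) \<le> \<delta> (A' \<inter> B1)" by linarith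
  have eq: "(A' \<inter> B1) \<inter> B2 = B1 \<inter> B2" using A' by blast
  have "\<delta> (B1 \<inter> B2) \<le> \<delta> (A' \<inter> B1)" using h unfolding eq .
  thus "\<delta> (B1 \<inter> B2) \<le> \<delta> A'" using 1 by linarith
qed

lemma cl_props:
  assumes "finite S" "S \<subseteq> M"
  shows "finite (clo S) \<and> S \<subseteq> clo S \<and> closed (clo S)"
proof -
  let ?F = "{B. finite B \<and> S \<subseteq> B \<and> closed B}"
  obtain B where B: "finite B" "S \<subseteq> B" "B \<subseteq> M" "\<forall>B'. finite B' \<and> S \<subseteq> B' \<and> B' \<subseteq> M \<longrightarrow> \<delta> B \<le> \<delta> B'"
    using min_exists[OF assms] by blast
  have "closed B" by (rule closedI, fact, use B in auto)
  hence "B \<in> ?F" using B by blast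
  from ex_has_least_nat[of "\<lambda>B. B \<in> ?F" B card, OF this]
  obtain B0 where B0: "B0 \<in> ?F" "\<forall>B'. B' \<in> ?F \<longrightarrow> card B0 \<le> card B'" by blast
  have "\<forall>B'\<in>?F. B0 \<subseteq> B'"
  proof
    fix B' assume B': "B' \<in> ?F"
    hence "B0 \<inter> B' \<in> ?F" using B0 closed_Int by auto
    hence "card B0 \<le> card (B0 \<inter> B')" using B0 by blast
    moreover have "finite B0" using B0 by blast
    ultimately have "B0 \<inter> B' = B0" by (metis card_seteq inf_le1 finite_Int)
    thus "B0 \<subseteq> B'" by blast
  qed
  hence "clo S = B0" unfolding cl_def using B0(1) by blast
  thus ?thesis using B0 by auto
qed

lemma cl_least: "finite B \<Longrightarrow> closed B \<Longrightarrow> S \<subseteq> B \<Longrightarrow> clo S \<subseteq> B"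
  unfolding cl_def by blast

lemma cl_sub: "finite S \<Longrightarrow> S \<subseteq> M \<Longrightarrow> clo S \<subseteq> M"
  using cl_props closed_sub by blast

lemma dd_le:
  assumes "finite B" "S \<subseteq> B" "B \<subseteq> M"
  shows "d S \<le> \<delta> B"
proof -
  have fS: "finite S" "S \<subseteq> M" using assms finite_subset by auto
  obtain Bm where Bm: "finite Bm" "S \<subseteq> Bm" "Bm \<subseteq> M" "\<forall>B'. finite B' \<and> S \<subseteq> B' \<and> B' \<subseteq> M \<longrightarrow> \<delta> Bm \<le> \<delta> B'"
    using min_exists[OF fS] by blast
  have "closed Bm" by (rule closedI, fact, use Bm in auto)
  hence "clo S \<subseteq> Bm" using cl_least Bm by blast
  hence "\<delta> (clo S) \<le> \<delta> Bm" using cl_props[OF fS] closedD Bm by blast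
  thus ?thesis using Bm assms unfolding dd_def by force
qed

lemma dd_eq: "finite S \<Longrightarrow> S \<subseteq> M \<Longrightarrow> d S = \<delta> (clo S)"
  by (simp add: dd_def)

lemma dd_mono: "finite S' \<Longrightarrow> S \<subseteq> S' \<Longrightarrow> S' \<subseteq> M \<Longrightarrow> d S \<le> d S'"
proof -
  assume a: "finite S'" "S \<subseteq> S'" "S' \<subseteq> M"
  have c: "finite (clo S')" "S' \<subseteq> clo S'" "clo S' \<subseteq> M" using cl_props[OF a(1,3)] cl_sub[OF a(1,3)] by auto
  have "d S \<le> \<delta> (clo S')" by (rule dd_le) (use c a in auto)
  thus ?thesis using dd_eq[OF a(1,3)] by simp
qed

lemma closed_of_dd: "finite B \<Longrightarrow> B \<subseteq> M \<Longrightarrow> \<delta> B \<le> d B \<Longrightarrow> closed B"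
  by (rule closedI, simp, metis dd_le order.trans)

lemma dd_closed: "finite B \<Longrightarrow> closed B \<Longrightarrow> d B = \<delta> B"
  using cl_least[of B B] cl_props[of B] closed_sub[of B] dd_eq[of B] by auto

lemma dd_submod:
  assumes "finite P" "finite Q" "P \<subseteq> M" "Q \<subseteq> M"
  shows "d (P \<union> Q) + d (P \<inter> Q) \<le> d P + d Q"
proof -
  have cP: "finite (clo P)" "P \<subseteq> clo P" "clo P \<subseteq> M" using cl_props cl_sub assms by auto
  have cQ: "finite (clo Q)" "Q \<subseteq> clo Q" "clo Q \<subseteq> M" using cl_props cl_sub assms by auto
  have "d (P \<union> Q) \<le> \<delta> (clo P \<union> clo Q)" using dd_le cP cQ by (meson Un_mono finite_UnI le_sup_iff)
  moreover have "d (P \<inter> Q) \<le> \<delta> (clo P \<inter> clo Q)" using dd_le cP cQ by (meson Int_mono finite_Int inf.coboundedI1)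
  moreover have "\<delta> (clo P \<union> clo Q) + \<delta> (clo P \<inter> clo Q) \<le> \<delta> (clo P) + \<delta> (clo Q)" using submod cP cQ by blast
  ultimately show ?thesis using dd_eq assms by auto
qed

lemma dd_cl_Un:
  assumes "finite S" "finite T" "S \<subseteq> M" "T \<subseteq> M"
  shows "d (clo S \<union> T) = d (S \<union> T)"
proof -
  have c: "finite (clo (S \<union> T))" "S \<union> T \<subseteq> clo (S \<union> T)" "closed (clo (S \<union> T))" using cl_props assms by auto
  hence "clo S \<subseteq> clo (S \<union> T)" using cl_least by blast
  hence "d (clo S \<union> T) \<le> \<delta> (clo (S \<union> T))" using dd_le c closed_sub by (meson Un_least le_sup_iff)
  moreover have "d (S \<union> T) \<le> d (clo S \<union> T)"
    using dd_mono cl_props cl_sub assms by (meson Un_mono finite_UnI le_sup_iff order_refl)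
  ultimately show ?thesis using dd_eq assms by auto
qed

section \<open>Automorphisms\<close>

lemma aut_props:
  assumes "automorphism E M \<sigma>"
  shows "bij_betw \<sigma> M M" "inj_on \<sigma> M" "\<sigma> ` M = M" "\<And>x y. x \<in> M \<Longrightarrow> y \<in> M \<Longrightarrow> E x y \<longleftrightarrow> E (\<sigma> x) (\<sigma> y)"
proof -
  have p: "bij_betw \<sigma> M M" "\<forall>x\<in>M. \<forall>y\<in>M. E x y \<longleftrightarrow> E (\<sigma> x) (\<sigma> y)"
    using assms unfolding automorphism_def partial_iso_def by blast+
  show "bij_betw \<sigma> M M" by (rule p(1))
  show "inj_on \<sigma> M" using p(1) by (rule bij_betw_imp_inj_on)
  show "\<sigma> ` M = M" using p(1) by (rule bij_betw_imp_surj_on)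
  show "\<And>x y. x \<in> M \<Longrightarrow> y \<in> M \<Longrightarrow> E x y \<longleftrightarrow> E (\<sigma> x) (\<sigma> y)" using p(2) by blast
qed

lemma delta_aut:
  assumes "automorphism E M \<sigma>" "S \<subseteq> M"
  shows "\<delta> (\<sigma> ` S) = \<delta> S"
proof (rule delta_image)
  show "inj_on \<sigma> S" using aut_props(2)[OF assms(1)] assms(2) by (rule inj_on_subset)
  show "\<forall>x\<in>S. \<forall>y\<in>S. E x y = E (\<sigma> x) (\<sigma> y)" using aut_props(4)[OF assms(1)] assms(2) by blast
qed

lemma preimage:
  assumes "automorphism E M \<sigma>" "finite B" "B \<subseteq> M"
  shows "finite {x\<in>M. \<sigma> x \<in> B}" "\<sigma> ` {x\<in>M. \<sigma> x \<in> B} = B"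
proof -
  note a = aut_props[OF assms(1)]
  let ?B' = "{x\<in>M. \<sigma> x \<in> B}"
  show i: "\<sigma> ` ?B' = B" using a(3) assms(3) by force
  have "inj_on \<sigma> ?B'" using a(2) by (rule inj_on_subset) auto
  thus "finite ?B'" using assms(2) i finite_imageD by metis
qed

lemma dd_aut:
  assumes "automorphism E M \<sigma>" "finite S" "S \<subseteq> M"
  shows "d (\<sigma> ` S) = d S"
proof -
  note a = aut_props[OF assms(1)]
  have sS: "finite (\<sigma> ` S)" "\<sigma> ` S \<subseteq> M" using assms a(3) by auto
  have c: "finite (clo S)" "S \<subseteq> clo S" "clo S \<subseteq> M" using cl_props[OF assms(2,3)] cl_sub[OF assms(2,3)] by auto
  have "d (\<sigma> ` S) \<le> \<delta> (\<sigma> ` clo S)"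
  proof (rule dd_le)
    show "finite (\<sigma> ` clo S)" using c(1) by (rule finite_imageI)
    show "\<sigma> ` S \<subseteq> \<sigma> ` clo S" using c(2) by (rule image_mono)
    show "\<sigma> ` clo S \<subseteq> M" using c(3) a(3) by blast
  qed
  also have "\<dots> = d S" using delta_aut[OF assms(1) c(3)] dd_eq[OF assms(2,3)] by simp
  finally have 1: "d (\<sigma> ` S) \<le> d S" .
  have c2: "finite (clo (\<sigma> ` S))" "\<sigma> ` S \<subseteq> clo (\<sigma> ` S)" "clo (\<sigma> ` S) \<subseteq> M" using cl_props[OF sS] cl_sub[OF sS] by auto
  define B' where "B' = {x\<in>M. \<sigma> x \<in> clo (\<sigma> ` S)}"
  have B': "finite B'" "B' \<subseteq> M" "\<sigma> ` B' = clo (\<sigma> ` S)"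
    using preimage[OF assms(1) c2(1) c2(3)] unfolding B'_def by auto
  have "S \<subseteq> B'" using assms(3) c2(2) unfolding B'_def by blast
  have "d S \<le> \<delta> B'" using dd_le B'(1,2) \<open>S \<subseteq> B'\<close> by blast
  also have "\<dots> = \<delta> (\<sigma> ` B')" using delta_aut[OF assms(1) B'(2)] by simp
  also have "\<dots> = d (\<sigma> ` S)" using B'(3) dd_eq[OF sS] by simp
  finally show ?thesis using 1 by simp
qed

lemma closed_aut:
  assumes "automorphism E M \<sigma>" "finite B" "closed B"
  shows "closed (\<sigma> ` B)"
proof (rule closedI)
  note a = aut_props[OF assms(1)]
  have BM: "B \<subseteq> M" using closed_sub assms by blast
  show "\<sigma> ` B \<subseteq> M" using a(3) BM by blast
  fix A' assume A': "finite A'" "\<sigma> ` B \<subseteq> A'" "A' \<subseteq> M"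
  define B' where "B' = {x\<in>M. \<sigma> x \<in> A'}"
  have B': "finite B'" "B' \<subseteq> M" "\<sigma> ` B' = A'"
    using preimage[OF assms(1) A'(1,3)] unfolding B'_def by auto
  have "B \<subseteq> B'" using BM A'(2) unfolding B'_def by blast
  have "\<delta> B \<le> \<delta> B'" using closedD[OF assms(3) B'(1) \<open>B \<subseteq> B'\<close> B'(2)] .
  also have "\<dots> = \<delta> A'" using delta_aut[OF assms(1) B'(2)] B'(3) by simp
  finally show "\<delta> (\<sigma> ` B) \<le> \<delta> A'" using delta_aut[OF assms(1) BM] by simp
qed

end

locale gcx = gen +
  fixes A :: "'a set"
  assumes AM: "A \<subseteq> M" and finA: "finite A"
begin

definition "X = gcl mm M E A"

abbreviation "k \<equiv> d A"

lemma X_sub: "X \<subseteq> M" unfolding X_def gcl_def by blast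

lemma X_char: "x \<in> X \<longleftrightarrow> x \<in> M \<and> d (insert x A) = k"
proof
  assume "x \<in> X"
  hence "x \<in> M \<and> (\<exists>A'. A' \<subseteq> A \<and> finite A' \<and> dd_rel mm M E x A' = 0)"
    unfolding X_def gcl_def by simp
  then obtain A' where A': "x \<in> M" "A' \<subseteq> A" "finite A'" "dd_rel mm M E x A' = 0"
    by (elim conjE exE) simp
  have e: "d (insert x A') = d A'" using A'(4) unfolding dd_rel_def by simp
  have fin: "finite (insert x A')" "finite A" "insert x A' \<subseteq> M" using A' finA AM by auto
  have eq: "insert x A' \<union> A = insert x A" using A' by auto
  have "d (insert x A) + d (insert x A' \<inter> A) \<le> d (insert x A') + d A"
    using dd_submod[OF fin(1,2,3) AM] unfolding eq .
  moreover have "d A' \<le> d (insert x A' \<inter> A)"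
    by (rule dd_mono) (use A' finA AM in auto)
  ultimately have "d (insert x A) \<le> k" using e by linarith
  moreover have "k \<le> d (insert x A)" by (rule dd_mono) (use A' finA AM in auto)
  ultimately show "x \<in> M \<and> d (insert x A) = k" using A' by simp
next
  assume "x \<in> M \<and> d (insert x A) = k"
  hence "x \<in> M \<and> (A \<subseteq> A \<and> finite A \<and> dd_rel mm M E x A = 0)"
    unfolding dd_rel_def using finA by simp
  hence "x \<in> M \<and> (\<exists>A'. A' \<subseteq> A \<and> finite A' \<and> dd_rel mm M E x A' = 0)" by blast
  thus "x \<in> X" unfolding X_def gcl_def by simp
qed

lemma A_X: "A \<subseteq> X"
proof
  fix x assume "x \<in> A"
  hence "insert x A = A" by blast
  thus "x \<in> X" using X_char AM \<open>x \<in> A\<close> by auto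
qed

lemma X1: "finite Z \<Longrightarrow> Z \<subseteq> X \<Longrightarrow> d (A \<union> Z) = k"
proof (induction Z rule: finite_induct)
  case empty thus ?case by simp
next
  case (insert z Z)
  have zX: "z \<in> M" "d (insert z A) = k" using insert X_char by auto
  have fin: "finite (A \<union> Z)" "finite (insert z A)" "A \<union> Z \<subseteq> M" "insert z A \<subseteq> M"
    using insert finA AM X_sub by auto
  have IH: "d (A \<union> Z) = k" using insert by blast
  have eq: "(A \<union> Z) \<union> insert z A = A \<union> insert z Z" by auto
  have "d (A \<union> insert z Z) + d ((A \<union> Z) \<inter> insert z A) \<le> d (A \<union> Z) + d (insert z A)"
    using dd_submod[OF fin] unfolding eq .
  moreover have "k \<le> d ((A \<union> Z) \<inter> insert z A)"
    by (rule dd_mono) (use fin in auto)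
  ultimately have "d (A \<union> insert z Z) \<le> k" using IH zX by linarith
  moreover have "k \<le> d (A \<union> insert z Z)" by (rule dd_mono) (use fin insert in auto)
  ultimately show ?case by simp
qed

lemma X2: "finite Z \<Longrightarrow> Z \<subseteq> X \<Longrightarrow> d Z \<le> k"
  using X1[of Z] dd_mono[of "A \<union> Z" Z] finA AM X_sub by auto

lemma X3:
  assumes "finite Z" "Z \<subseteq> X"
  shows "clo (A \<union> Z) \<subseteq> X" "\<delta> (clo (A \<union> Z)) = k" "A \<union> Z \<subseteq> clo (A \<union> Z)" "finite (clo (A \<union> Z))"
    "closed (clo (A \<union> Z))"
proof -
  have f: "finite (A \<union> Z)" "A \<union> Z \<subseteq> M" using assms finA AM X_sub by auto
  note c = cl_props[OF f] cl_sub[OF f]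
  show dl: "\<delta> (clo (A \<union> Z)) = k" using dd_eq[OF f] X1[OF assms] by simp
  show "A \<union> Z \<subseteq> clo (A \<union> Z)" "finite (clo (A \<union> Z))" "closed (clo (A \<union> Z))" using c by auto
  show "clo (A \<union> Z) \<subseteq> X"
  proof
    fix z assume z: "z \<in> clo (A \<union> Z)"
    have "d (insert z A) \<le> \<delta> (clo (A \<union> Z))" by (rule dd_le) (use c z in auto)
    moreover have "k \<le> d (insert z A)" by (rule dd_mono) (use c z f in auto)
    ultimately show "z \<in> X" using X_char dl c z by auto
  qed
qed

lemma X4: "x \<in> M \<Longrightarrow> x \<notin> X \<Longrightarrow> k < d (insert x A)"
  using X_char dd_mono[of "insert x A" A] finA AM by fastforce

lemma K:
  assumes "finite Z" "Z \<subseteq> X" "finite W" "W \<subseteq> M" "W \<inter> X = {}" "W \<noteq> {}"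
  shows "\<delta> Z < \<delta> (Z \<union> W)"
proof -
  let ?Z1 = "clo (A \<union> Z)"
  note z1 = X3[OF assms(1,2)]
  obtain w where w: "w \<in> W" using assms(6) by blast
  have f1: "finite (Z \<union> W)" "finite ?Z1" using assms z1 by auto
  have "\<delta> ((Z \<union> W) \<union> ?Z1) + \<delta> ((Z \<union> W) \<inter> ?Z1) \<le> \<delta> (Z \<union> W) + \<delta> ?Z1" using submod[OF f1] .
  moreover have "(Z \<union> W) \<inter> ?Z1 = Z" using z1(1,3) assms(5) by blast
  moreover have "k < \<delta> ((Z \<union> W) \<union> ?Z1)"
  proof -
    have "k < d (insert w A)" using X4 w assms(4,5) by blast
    also have "\<dots> \<le> \<delta> ((Z \<union> W) \<union> ?Z1)"
      by (rule dd_le) (use w z1 f1 assms X_sub in auto)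
    finally show ?thesis .
  qed
  ultimately show ?thesis using z1(2) by simp
qed

lemma K':
  assumes "finite Z" "Z \<subseteq> X" "\<And>Z''. finite Z'' \<Longrightarrow> Z \<subseteq> Z'' \<Longrightarrow> Z'' \<subseteq> X \<Longrightarrow> \<delta> Z \<le> \<delta> Z''"
  shows "closed Z"
proof (rule closedI)
  show "Z \<subseteq> M" using assms X_sub by blast
  fix A' assume A': "finite A'" "Z \<subseteq> A'" "A' \<subseteq> M"
  have 1: "\<delta> Z \<le> \<delta> (A' \<inter> X)" by (rule assms(3)) (use A' assms in auto)
  show "\<delta> Z \<le> \<delta> A'"
  proof (cases "A' - X = {}")
    case True
    hence "A' \<inter> X = A'" by blast
    thus ?thesis using 1 by simp
  next
    case False
    have "\<delta> (A' \<inter> X) < \<delta> ((A' \<inter> X) \<union> (A' - X))"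
      by (rule K) (use A' False in auto)
    moreover have "(A' \<inter> X) \<union> (A' - X) = A'" by blast
    ultimately show ?thesis using 1 by simp
  qed
qed

lemma autX_props:
  assumes "automorphism E X g"
  shows "bij_betw g X X" "inj_on g X" "g ` X = X" "\<And>x y. x \<in> X \<Longrightarrow> y \<in> X \<Longrightarrow> E x y \<longleftrightarrow> E (g x) (g y)"
proof -
  have p: "bij_betw g X X" "\<forall>x\<in>X. \<forall>y\<in>X. E x y \<longleftrightarrow> E (g x) (g y)"
    using assms unfolding automorphism_def partial_iso_def by blast+
  show "bij_betw g X X" by (rule p(1))
  show "inj_on g X" using p(1) by (rule bij_betw_imp_inj_on)
  show "g ` X = X" using p(1) by (rule bij_betw_imp_surj_on)
  show "\<And>x y. x \<in> X \<Longrightarrow> y \<in> X \<Longrightarrow> E x y \<longleftrightarrow> E (g x) (g y)" using p(2) by blast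
qed

lemma delta_autX:
  assumes "automorphism E X g" "S \<subseteq> X"
  shows "\<delta> (g ` S) = \<delta> S"
proof (rule delta_image)
  show "inj_on g S" using autX_props(2)[OF assms(1)] assms(2) by (rule inj_on_subset)
  show "\<forall>x\<in>S. \<forall>y\<in>S. E x y = E (g x) (g y)" using autX_props(4)[OF assms(1)] assms(2) by blast
qed

lemma gclosed:
  assumes "automorphism E X g" "finite Z" "Z \<subseteq> X" "closed Z"
  shows "closed (g ` Z)"
proof (rule K')
  note a = autX_props[OF assms(1)]
  show "finite (g ` Z)" using assms(2) by simp
  show "g ` Z \<subseteq> X" using a(3) assms(3) by blast
  fix Z'' assume Z'': "finite Z''" "g ` Z \<subseteq> Z''" "Z'' \<subseteq> X"
  define Z3 where "Z3 = {x\<in>X. g x \<in> Z''}"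
  have i: "g ` Z3 = Z''" using a(3) Z''(3) unfolding Z3_def by force
  have "inj_on g Z3" using a(2) by (rule inj_on_subset) (auto simp: Z3_def)
  hence f3: "finite Z3" using Z''(1) i finite_imageD by metis
  have "Z \<subseteq> Z3" using assms(3) Z''(2) unfolding Z3_def by blast
  have "\<delta> Z \<le> \<delta> Z3" using closedD[OF assms(4) f3 \<open>Z \<subseteq> Z3\<close>] X_sub unfolding Z3_def by blast
  also have "\<dots> = \<delta> Z''" using delta_autX[OF assms(1), of Z3] i unfolding Z3_def by auto
  finally show "\<delta> (g ` Z) \<le> \<delta> Z''" using delta_autX[OF assms(1) assms(3)] by simp
qed

end

context gcx begin

definition good where
  "good Y \<longleftrightarrow> finite Y \<and> Y \<subseteq> M \<and> (\<forall>x\<in>Y-X. \<forall>y\<in>X-Y. \<not> E x y) \<and>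
     (\<forall>Z. finite Z \<and> Y \<inter> X \<subseteq> Z \<and> Z \<subseteq> X \<and> closed Z \<longrightarrow> closed (Y \<union> Z))"

lemma free_lem:
  assumes "\<forall>x\<in>Y-X. \<forall>y\<in>X-Y. \<not> E x y" "Y \<subseteq> M" "Y \<inter> X \<subseteq> Q" "Q \<subseteq> X"
  shows "\<forall>x\<in>Y-Q. \<forall>y\<in>Q-Y. \<not> E x y \<and> \<not> E y x"
proof (intro ballI)
  fix x y assume x: "x \<in> Y - Q" and y: "y \<in> Q - Y"
  have xX: "x \<in> Y - X" using x assms(3) by blast
  have yX: "y \<in> X - Y" using y assms(4) by blast
  have n: "\<not> E x y" using assms(1) xX yX by blast
  have "x \<in> M" "y \<in> M" using xX yX assms(2) X_sub by auto
  hence "\<not> E y x" using n symE by blast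
  thus "\<not> E x y \<and> \<not> E y x" using n by blast
qed

lemma good_empty: "good {}"
  unfolding good_def by simp

lemma good_intro:
  assumes fY: "finite Y" and cY: "closed Y" and dY: "\<delta> (Y \<inter> X) = k"
  shows "good Y"
proof -
  have YM: "Y \<subseteq> M" using cY closed_sub by blast
  have fYX: "finite (Y \<inter> X)" using fY by simp
  have i: "\<forall>x\<in>Y-X. \<forall>y\<in>X-Y. \<not> E x y"
  proof (intro ballI notI)
    fix x y assume x: "x \<in> Y - X" and y: "y \<in> X - Y" and exy: "E x y"
    let ?Zc = "clo (A \<union> insert y (Y \<inter> X))"
    have f0: "finite (insert y (Y \<inter> X))" "insert y (Y \<inter> X) \<subseteq> X" using fY y by auto
    note z = X3[OF f0]
    have YZ: "Y \<inter> ?Zc = Y \<inter> X" using z(1,3) by blast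
    have "\<delta> (Y \<union> ?Zc) + \<delta> (Y \<inter> ?Zc) < \<delta> Y + \<delta> ?Zc"
      by (rule delta_cross[of Y ?Zc x y]) (use fY z x y exy in auto)
    hence lt: "\<delta> (Y \<union> ?Zc) < \<delta> Y" using YZ dY z(2) by simp
    have "\<delta> Y \<le> \<delta> (Y \<union> ?Zc)" by (rule closedD[OF cY]) (use fY z X_sub YM in auto)
    thus False using lt by simp
  qed
  have ii: "\<forall>Z. finite Z \<and> Y \<inter> X \<subseteq> Z \<and> Z \<subseteq> X \<and> closed Z \<longrightarrow> closed (Y \<union> Z)"
  proof (intro allI impI)
    fix Z assume Z: "finite Z \<and> Y \<inter> X \<subseteq> Z \<and> Z \<subseteq> X \<and> closed Z"
    hence Z': "finite Z" "Y \<inter> X \<subseteq> Z" "Z \<subseteq> X" "closed Z" by auto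
    show "closed (Y \<union> Z)"
    proof (rule closedI)
      show "Y \<union> Z \<subseteq> M" using YM Z' X_sub by blast
      fix V assume V: "finite V" "Y \<union> Z \<subseteq> V" "V \<subseteq> M"
      let ?Z2 = "clo (A \<union> (V \<inter> X))"
      have f0: "finite (V \<inter> X)" "V \<inter> X \<subseteq> X" using V by auto
      note z = X3[OF f0]
      have YZ2: "Y \<inter> ?Z2 = Y \<inter> X" using z(1,3) V(2) by blast
      have fr1: "\<forall>x\<in>Y-?Z2. \<forall>y\<in>?Z2-Y. \<not> E x y \<and> \<not> E y x"
        by (rule free_lem[OF i YM]) (use z V in auto)
      have e1: "\<delta> (Y \<union> ?Z2) + \<delta> (Y \<inter> X) = \<delta> Y + \<delta> ?Z2"
        using delta_free[OF fY z(4) fr1] YZ2 by simp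
      hence e1': "\<delta> (Y \<union> ?Z2) = \<delta> Y" using dY z(2) by simp
      have fVZ: "finite (V \<union> (Y \<union> ?Z2))" "finite (Y \<union> ?Z2)" using V fY z by auto
      have "\<delta> Y \<le> \<delta> (V \<union> (Y \<union> ?Z2))" by (rule closedD[OF cY]) (use fVZ V z X_sub in auto)
      moreover have "\<delta> (V \<union> (Y \<union> ?Z2)) + \<delta> (V \<inter> (Y \<union> ?Z2)) \<le> \<delta> V + \<delta> (Y \<union> ?Z2)"
        using submod[OF V(1) fVZ(2)] .
      moreover have "V \<inter> (Y \<union> ?Z2) = Y \<union> (V \<inter> X)" using V(2) z(1,3) by blast
      ultimately have 1: "\<delta> (Y \<union> (V \<inter> X)) \<le> \<delta> V" using e1' by simp
      have fr2: "\<forall>x\<in>Y-(V \<inter> X). \<forall>y\<in>(V \<inter> X)-Y. \<not> E x y \<and> \<not> E y x"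
        by (rule free_lem[OF i YM]) (use V in auto)
      have "Y \<inter> (V \<inter> X) = Y \<inter> X" using V by blast
      hence 2: "\<delta> (Y \<union> (V \<inter> X)) + \<delta> (Y \<inter> X) = \<delta> Y + \<delta> (V \<inter> X)"
        using delta_free[OF fY f0(1) fr2] by simp
      have fr3: "\<forall>x\<in>Y-Z. \<forall>y\<in>Z-Y. \<not> E x y \<and> \<not> E y x"
        by (rule free_lem[OF i YM]) (use Z' in auto)
      have "Y \<inter> Z = Y \<inter> X" using Z' by blast
      hence 3: "\<delta> (Y \<union> Z) + \<delta> (Y \<inter> X) = \<delta> Y + \<delta> Z"
        using delta_free[OF fY Z'(1) fr3] by simp
      have 4: "\<delta> Z \<le> \<delta> (V \<inter> X)" by (rule closedD[OF Z'(4)]) (use Z' V in auto)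
      show "\<delta> (Y \<union> Z) \<le> \<delta> V" using 1 2 3 4 by linarith
    qed
  qed
  show ?thesis unfolding good_def using fY YM i ii by blast
qed

lemma constancy:
  assumes "finite W" "W \<subseteq> M" "finite Z" "A \<subseteq> Z" "Z \<subseteq> X"
  shows "d (W \<union> Z) = d (W \<union> A)"
proof -
  have f: "finite (W \<union> A)" "W \<union> A \<subseteq> M" "Z \<subseteq> M" using assms finA AM X_sub by auto
  have eq: "(W \<union> A) \<union> Z = W \<union> Z" using assms by blast
  have "d (W \<union> Z) + d ((W \<union> A) \<inter> Z) \<le> d (W \<union> A) + d Z"
    using dd_submod[OF f(1) assms(3) f(2) f(3)] unfolding eq .
  moreover have "k \<le> d ((W \<union> A) \<inter> Z)" by (rule dd_mono) (use assms f in auto)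
  moreover have "d Z \<le> k" using X2 assms by blast
  ultimately have "d (W \<union> Z) \<le> d (W \<union> A)" by linarith
  moreover have "d (W \<union> A) \<le> d (W \<union> Z)" by (rule dd_mono) (use assms f in auto)
  ultimately show ?thesis by simp
qed

lemma construct:
  assumes "finite W" "W \<subseteq> M"
  defines "Y \<equiv> clo (A \<union> W)"
  shows "finite Y" "W \<subseteq> Y" "A \<subseteq> Y" "closed Y" "\<delta> (Y \<inter> X) = k" "closed (Y \<inter> X)"
proof -
  have f: "finite (A \<union> W)" "A \<union> W \<subseteq> M" using assms finA AM by auto
  note c = cl_props[OF f] cl_sub[OF f]
  show fY: "finite Y" and "W \<subseteq> Y" "A \<subseteq> Y" and cY: "closed Y" using c unfolding Y_def by auto
  hence AY0: "A \<subseteq> Y \<inter> X" using A_X by blast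
  have f0: "finite (Y \<inter> X)" "Y \<inter> X \<subseteq> X" using fY by auto
  let ?Z1 = "clo (A \<union> (Y \<inter> X))"
  note z = X3[OF f0]
  have YM: "Y \<subseteq> M" using cY closed_sub by blast
  have "d (Y \<union> ?Z1) \<le> \<delta> (Y \<union> ?Z1)" by (rule dd_le) (use fY z YM X_sub in auto)
  moreover have "d (Y \<union> ?Z1) = \<delta> Y"
  proof -
    have fz: "finite ?Z1" "?Z1 \<subseteq> M" using z X_sub by auto
    have "d (Y \<union> ?Z1) = d ((A \<union> W) \<union> ?Z1)" using dd_cl_Un[OF f(1) fz(1) f(2) fz(2)] unfolding Y_def .
    also have "(A \<union> W) \<union> ?Z1 = W \<union> (A \<union> ?Z1)" by blast
    also have "d (W \<union> (A \<union> ?Z1)) = d (W \<union> A)" by (rule constancy) (use assms fz z finA in auto)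
    also have "W \<union> A = A \<union> W" by blast
    also have "d (A \<union> W) = \<delta> Y" unfolding Y_def by (rule dd_eq[OF f])
    finally show ?thesis .
  qed
  moreover have "\<delta> (Y \<union> ?Z1) + \<delta> (Y \<inter> ?Z1) \<le> \<delta> Y + \<delta> ?Z1" using submod[OF fY z(4)] .
  moreover have "Y \<inter> ?Z1 = Y \<inter> X" using z(1,3) by blast
  ultimately have le: "\<delta> (Y \<inter> X) \<le> k" using z(2) by simp
  have "A \<union> (Y \<inter> X) = Y \<inter> X" using AY0 by blast
  hence dY0: "d (Y \<inter> X) = k" using X1[OF f0] by simp
  have "d (Y \<inter> X) \<le> \<delta> (Y \<inter> X)" by (rule dd_le) (use f0 X_sub in auto)
  thus "\<delta> (Y \<inter> X) = k" using le dY0 by simp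
  thus "closed (Y \<inter> X)" using closed_of_dd[OF f0(1)] f0(2) X_sub dY0 by auto
qed

end

context gcx begin

definition Inv where
  "Inv g h C D \<longleftrightarrow> automorphism E X g \<and> good C \<and> good D \<and> (\<forall>x\<in>X. h x = g x) \<and>
     bij_betw h (X \<union> C) (X \<union> D) \<and> (\<forall>x\<in>X \<union> C. \<forall>y\<in>X \<union> C. E x y \<longleftrightarrow> E (h x) (h y)) \<and> h ` C = D"

lemma InvD:
  assumes "Inv g h C D"
  shows "automorphism E X g" "good C" "good D" "\<And>x. x\<in>X \<Longrightarrow> h x = g x"
     "bij_betw h (X \<union> C) (X \<union> D)" "\<And>x y. x\<in>X \<union> C \<Longrightarrow> y\<in>X \<union> C \<Longrightarrow> E x y \<longleftrightarrow> E (h x) (h y)" "h ` C = D"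
  using assms unfolding Inv_def by blast+

lemma goodD: "good Y \<Longrightarrow> finite Y" "good Y \<Longrightarrow> Y \<subseteq> M" "good Y \<Longrightarrow> \<forall>x\<in>Y-X. \<forall>y\<in>X-Y. \<not> E x y"
  "good Y \<Longrightarrow> finite Z \<Longrightarrow> Y \<inter> X \<subseteq> Z \<Longrightarrow> Z \<subseteq> X \<Longrightarrow> closed Z \<Longrightarrow> closed (Y \<union> Z)"
  unfolding good_def by blast+

lemma step_forth:
  assumes I: "Inv g h C D" and m: "m \<in> M"
  shows "\<exists>h' C' D'. Inv g h' C' D' \<and> insert m C \<subseteq> C' \<and> (\<forall>x\<in>X \<union> C. h' x = h x)"
proof -
  note I' = InvD[OF I]
  note a = autX_props[OF I'(1)]
  have hinj: "inj_on h (X \<union> C)" using I'(5) by (rule bij_betw_imp_inj_on)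
  have himg: "h ` (X \<union> C) = X \<union> D" using I'(5) by (rule bij_betw_imp_surj_on)
  have fC: "finite C" "C \<subseteq> M" using goodD I'(2) by auto
  have fD: "finite D" "D \<subseteq> M" using goodD I'(3) by auto
  define W where "W = insert m C"
  have fW: "finite W" "W \<subseteq> M" using fC m unfolding W_def by auto
  define Y where "Y = clo (A \<union> W)"
  note cY = construct[OF fW, folded Y_def]
  define Y0 where "Y0 = Y \<inter> X"
  have fY0: "finite Y0" "Y0 \<subseteq> X" "closed Y0" "\<delta> Y0 = k" using cY unfolding Y0_def by auto
  have YM: "Y \<subseteq> M" using cY(4) closed_sub by blast
  have goodY: "good Y" using good_intro[OF cY(1) cY(4) cY(5)] .
  have CY: "C \<subseteq> Y" using cY(2) unfolding W_def by blast
  have CY0: "C \<inter> X \<subseteq> Y0" using CY unfolding Y0_def by blast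
  have closedCY0: "closed (C \<union> Y0)" using goodD(4)[OF I'(2) fY0(1) CY0 fY0(2,3)] .
  have closedgY0: "closed (g ` Y0)" using gclosed[OF I'(1) fY0(1,2,3)] .
  have hCX: "\<And>c. c \<in> C - X \<Longrightarrow> h c \<notin> X"
  proof
    fix c assume c: "c \<in> C - X" and hc: "h c \<in> X"
    then obtain x where x: "x \<in> X" "g x = h c" using a(3) by (metis imageE)
    have "h x = h c" using x I'(4) by simp
    hence "x = c" using hinj x c by (meson UnCI DiffD1 inj_on_def)
    thus False using x c by blast
  qed
  have DX: "D \<inter> X \<subseteq> g ` Y0"
  proof
    fix z assume z: "z \<in> D \<inter> X"
    then obtain c where c: "c \<in> C" "h c = z" using I'(7) by blast
    have "c \<in> X" using hCX c z by blast
    hence "z = g c" "c \<in> Y0" using c I'(4) CY0 by auto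
    thus "z \<in> g ` Y0" by blast
  qed
  have gY0X: "g ` Y0 \<subseteq> X" using a(3) fY0(2) by blast
  have closedDg: "closed (D \<union> g ` Y0)" using goodD(4)[OF I'(3) _ DX gY0X closedgY0] fY0(1) by simp
  have hY0: "h ` Y0 = g ` Y0" using I'(4) fY0(2) by (auto intro!: image_cong)
  have img: "h ` (C \<union> Y0) = D \<union> g ` Y0" using I'(7) hY0 by (simp add: image_Un)
  have sub: "C \<union> Y0 \<subseteq> X \<union> C" using fY0(2) by blast
  have piso: "partial_iso E E h (C \<union> Y0) (D \<union> g ` Y0)"
    unfolding partial_iso_def
  proof
    show "bij_betw h (C \<union> Y0) (D \<union> g ` Y0)" unfolding bij_betw_def
      using inj_on_subset[OF hinj sub] img by blast
    show "\<forall>x\<in>C \<union> Y0. \<forall>y\<in>C \<union> Y0. E x y = E (h x) (h y)" using I'(6) sub by blast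
  qed
  obtain \<sigma> where \<sigma>: "automorphism E M \<sigma>" "\<forall>x\<in>C \<union> Y0. \<sigma> x = h x"
    using homog[OF _ _ closedCY0 closedDg piso] fC fY0 fD by blast
  note s = aut_props[OF \<sigma>(1)]
  define h' where "h' = (\<lambda>x. if x \<in> X then g x else \<sigma> x)"
  have f1: "\<And>x. x \<in> Y \<Longrightarrow> h' x = \<sigma> x"
  proof -
    fix x assume x: "x \<in> Y"
    show "h' x = \<sigma> x"
    proof (cases "x \<in> X")
      case True
      hence "x \<in> Y0" using x unfolding Y0_def by blast
      thus ?thesis using True \<sigma>(2) I'(4) unfolding h'_def by auto
    qed (simp add: h'_def)
  qed
  have sY0: "\<sigma> ` Y0 = g ` Y0" using \<sigma>(2) hY0 by (metis (no_types, lifting) UnCI image_cong)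
  have f2: "\<And>y. y \<in> Y - X \<Longrightarrow> \<sigma> y \<notin> X"
  proof
    fix y assume y: "y \<in> Y - X" and sy: "\<sigma> y \<in> X"
    let ?S = "insert y Y0"
    have fS: "finite ?S" "?S \<subseteq> M" using fY0 y YM X_sub by auto
    have "k < d (insert y A)" using X4 y YM by blast
    also have "\<dots> \<le> d ?S" by (rule dd_mono) (use fS cY(3) A_X in \<open>auto simp: Y0_def\<close>)
    also have "\<dots> = d (\<sigma> ` ?S)" using dd_aut[OF \<sigma>(1) fS] by simp
    also have "\<dots> \<le> k"
    proof (rule X2)
      show "finite (\<sigma> ` ?S)" using fS by simp
      show "\<sigma> ` ?S \<subseteq> X" using sy sY0 gY0X by auto
    qed
    finally show False by simp
  qed
  have f3: "\<sigma> ` Y \<inter> X = g ` Y0"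
  proof
    show "g ` Y0 \<subseteq> \<sigma> ` Y \<inter> X" using sY0 gY0X unfolding Y0_def by blast
    show "\<sigma> ` Y \<inter> X \<subseteq> g ` Y0"
    proof
      fix z assume z: "z \<in> \<sigma> ` Y \<inter> X"
      then obtain y where y: "y \<in> Y" "z = \<sigma> y" by blast
      have "y \<in> X" using f2 y z by blast
      hence "y \<in> Y0" using y unfolding Y0_def by blast
      thus "z \<in> g ` Y0" using y sY0 by blast
    qed
  qed
  have goodsY: "good (\<sigma> ` Y)"
  proof (rule good_intro)
    show "finite (\<sigma> ` Y)" using cY(1) by simp
    show "closed (\<sigma> ` Y)" using closed_aut[OF \<sigma>(1) cY(1) cY(4)] .
    show "\<delta> (\<sigma> ` Y \<inter> X) = k" using f3 delta_autX[OF I'(1) fY0(2)] fY0(4) by simp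
  qed
  have sYM: "\<sigma> ` Y \<subseteq> M" using goodD(2)[OF goodsY] .
  have f5: "h' ` (X \<union> Y) = X \<union> \<sigma> ` Y"
  proof -
    have "h' ` X = g ` X" unfolding h'_def by (auto intro!: image_cong)
    moreover have "h' ` Y = \<sigma> ` Y" using f1 by (auto intro!: image_cong)
    ultimately show ?thesis using a(3) by (simp add: image_Un)
  qed
  have f6: "inj_on h' (X \<union> Y)"
  proof (subst inj_on_Un, intro conjI)
    show "inj_on h' X" using a(2) unfolding h'_def inj_on_def by auto
    show "inj_on h' Y" using inj_on_subset[OF s(2) YM] f1 unfolding inj_on_def by metis
    have "h' ` (X - Y) \<subseteq> X" using a(3) unfolding h'_def by auto
    moreover have "h' ` (Y - X) \<inter> X = {}" using f2 unfolding h'_def by auto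
    ultimately show "h' ` (X - Y) \<inter> h' ` (Y - X) = {}" by blast
  qed
  have frY: "\<forall>x\<in>Y-X. \<forall>y\<in>X-Y. \<not> E x y \<and> \<not> E y x"
    using free_lem[OF goodD(3)[OF goodY] YM] by blast
  have frsY: "\<forall>x\<in>\<sigma> ` Y-X. \<forall>y\<in>X-\<sigma> ` Y. \<not> E x y \<and> \<not> E y x"
    using free_lem[OF goodD(3)[OF goodsY] sYM] by blast
  have cross: "\<And>x y. x \<in> X - Y \<Longrightarrow> y \<in> Y - X \<Longrightarrow>
      \<not> E x y \<and> \<not> E y x \<and> \<not> E (h' x) (h' y) \<and> \<not> E (h' y) (h' x)"
  proof -
    fix x y assume x: "x \<in> X - Y" and y: "y \<in> Y - X"
    have hx: "h' x = g x" "h' y = \<sigma> y" using x y f1 unfolding h'_def by auto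
    have "g x \<notin> \<sigma> ` Y"
    proof
      assume "g x \<in> \<sigma> ` Y"
      hence "g x \<in> g ` Y0" using f3 a(3) x by blast
      then obtain y0 where "y0 \<in> Y0" "g x = g y0" by blast
      hence "x = y0" using a(2) x fY0(2) by (meson DiffD1 inj_on_def subsetD)
      thus False using \<open>y0 \<in> Y0\<close> x unfolding Y0_def by blast
    qed
    hence gx: "g x \<in> X - \<sigma> ` Y" using a(3) x by blast
    have sy: "\<sigma> y \<in> \<sigma> ` Y - X" using f2 y by blast
    show "\<not> E x y \<and> \<not> E y x \<and> \<not> E (h' x) (h' y) \<and> \<not> E (h' y) (h' x)"
    proof -
      have 1: "\<not> E y x \<and> \<not> E x y" using frY x y by blast
      have 2: "\<not> E (\<sigma> y) (g x) \<and> \<not> E (g x) (\<sigma> y)" using frsY gx sy by blast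
      show ?thesis using 1 2 unfolding hx by blast
    qed
  qed
  have f7: "\<forall>x\<in>X \<union> Y. \<forall>y\<in>X \<union> Y. E x y \<longleftrightarrow> E (h' x) (h' y)"
  proof (intro ballI)
    fix x y assume x: "x \<in> X \<union> Y" and y: "y \<in> X \<union> Y"
    show "E x y \<longleftrightarrow> E (h' x) (h' y)"
    proof (cases "x \<in> X \<and> y \<in> X")
      case True thus ?thesis using a(4) unfolding h'_def by simp
    next
      case nX: False
      show ?thesis
      proof (cases "x \<in> Y \<and> y \<in> Y")
        case True thus ?thesis using s(4) YM f1 by auto
      next
        case False
        hence "(x \<in> X - Y \<and> y \<in> Y - X) \<or> (y \<in> X - Y \<and> x \<in> Y - X)" using x y nX by blast
        thus ?thesis using cross by blast
      qed
    qed
  qed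
  have Inv': "Inv g h' Y (\<sigma> ` Y)" unfolding Inv_def
  proof (intro conjI)
    show "automorphism E X g" by (rule I'(1))
    show "good Y" by (rule goodY)
    show "good (\<sigma> ` Y)" by (rule goodsY)
    show "\<forall>x\<in>X. h' x = g x" unfolding h'_def by simp
    show "bij_betw h' (X \<union> Y) (X \<union> \<sigma> ` Y)" unfolding bij_betw_def using f5 f6 by blast
    show "\<forall>x\<in>X \<union> Y. \<forall>y\<in>X \<union> Y. E x y = E (h' x) (h' y)" by (rule f7)
    show "h' ` Y = \<sigma> ` Y" using f1 by (auto intro!: image_cong)
  qed
  have ext: "\<forall>x\<in>X \<union> C. h' x = h x"
  proof
    fix x assume x: "x \<in> X \<union> C"
    show "h' x = h x"
    proof (cases "x \<in> X")
      case True thus ?thesis using I'(4) unfolding h'_def by simp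
    next
      case False thus ?thesis using x \<sigma>(2) unfolding h'_def by simp
    qed
  qed
  show ?thesis using Inv' ext cY(2) unfolding W_def by blast
qed

end

context gcx begin

lemma Inv_inv:
  assumes I: "Inv g h C D"
  shows "Inv (inv_into X g) (inv_into (X \<union> C) h) D C"
proof -
  note I' = InvD[OF I]
  note a = autX_props[OF I'(1)]
  have hinj: "inj_on h (X \<union> C)" using I'(5) by (rule bij_betw_imp_inj_on)
  have himg: "h ` (X \<union> C) = X \<union> D" using I'(5) by (rule bij_betw_imp_surj_on)
  have autinv: "automorphism E X (inv_into X g)"
    unfolding automorphism_def partial_iso_def
  proof
    show "bij_betw (inv_into X g) X X" using bij_betw_inv_into[OF a(1)] .
    show "\<forall>x\<in>X. \<forall>y\<in>X. E x y = E (inv_into X g x) (inv_into X g y)"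
    proof (intro ballI)
      fix x y assume x: "x \<in> X" and y: "y \<in> X"
      have "inv_into X g x \<in> X" "inv_into X g y \<in> X" using x y a(3) by (metis inv_into_into)+
      moreover have "g (inv_into X g x) = x" "g (inv_into X g y) = y" using x y a(3) by (metis f_inv_into_f)+
      ultimately show "E x y = E (inv_into X g x) (inv_into X g y)" using a(4) by metis
    qed
  qed
  have eqX: "\<forall>x\<in>X. inv_into (X \<union> C) h x = inv_into X g x"
  proof
    fix x assume x: "x \<in> X"
    have "inv_into X g x \<in> X" "g (inv_into X g x) = x" using x a(3) by (metis inv_into_into f_inv_into_f)+
    thus "inv_into (X \<union> C) h x = inv_into X g x" using inv_into_f_eq[OF hinj] I'(4) by auto
  qed
  have edges: "\<forall>x\<in>X \<union> D. \<forall>y\<in>X \<union> D. E x y \<longleftrightarrow> E (inv_into (X \<union> C) h x) (inv_into (X \<union> C) h y)"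
  proof (intro ballI)
    fix x y assume x: "x \<in> X \<union> D" and y: "y \<in> X \<union> D"
    have "inv_into (X \<union> C) h x \<in> X \<union> C" "inv_into (X \<union> C) h y \<in> X \<union> C"
      using x y himg by (metis inv_into_into)+
    moreover have "h (inv_into (X \<union> C) h x) = x" "h (inv_into (X \<union> C) h y) = y"
      using x y himg by (metis f_inv_into_f)+
    ultimately show "E x y \<longleftrightarrow> E (inv_into (X \<union> C) h x) (inv_into (X \<union> C) h y)" using I'(6) by metis
  qed
  have "inv_into (X \<union> C) h ` D = C"
    using inv_into_image_cancel[OF hinj, of C] I'(7) by auto
  thus ?thesis unfolding Inv_def using autinv I'(2,3) eqX bij_betw_inv_into[OF I'(5)] edges by blast
qed

lemma Inv_cong:
  assumes "Inv g' h C D" "automorphism E X g" "\<forall>x\<in>X. g' x = g x"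
  shows "Inv g h C D"
  using assms unfolding Inv_def by auto

lemma step_back:
  assumes I: "Inv g h C D" and m: "m \<in> M"
  shows "\<exists>h' C' D'. Inv g h' C' D' \<and> C \<subseteq> C' \<and> insert m D \<subseteq> D' \<and> (\<forall>x\<in>X \<union> C. h' x = h x)"
proof -
  note I' = InvD[OF I]
  note a = autX_props[OF I'(1)]
  have hinj: "inj_on h (X \<union> C)" using I'(5) by (rule bij_betw_imp_inj_on)
  have himg: "h ` (X \<union> C) = X \<union> D" using I'(5) by (rule bij_betw_imp_surj_on)
  let ?g1 = "inv_into X g" and ?h1 = "inv_into (X \<union> C) h"
  have I1: "Inv ?g1 ?h1 D C" using Inv_inv[OF I] .
  obtain h2 C2 D2 where h2: "Inv ?g1 h2 C2 D2" "insert m D \<subseteq> C2" "\<forall>x\<in>X \<union> D. h2 x = ?h1 x"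
    using step_forth[OF I1 m] by blast
  note I2 = InvD[OF h2(1)]
  have h2inj: "inj_on h2 (X \<union> C2)" using I2(5) by (rule bij_betw_imp_inj_on)
  let ?h3 = "inv_into (X \<union> C2) h2"
  have I3: "Inv (inv_into X ?g1) ?h3 D2 C2" using Inv_inv[OF h2(1)] .
  have gg: "\<forall>x\<in>X. inv_into X ?g1 x = g x" using inv_into_inv_into_eq[OF a(1)] by blast
  have I4: "Inv g ?h3 D2 C2" using Inv_cong[OF I3 I'(1) gg] .
  have ext: "\<forall>x\<in>X \<union> C. ?h3 x = h x"
  proof
    fix x assume x: "x \<in> X \<union> C"
    have hx: "h x \<in> X \<union> D" using x himg by blast
    have "h2 (h x) = ?h1 (h x)" using h2(3) hx by blast
    also have "\<dots> = x" using inv_into_f_f[OF hinj x] .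
    finally have "h2 (h x) = x" .
    moreover have "h x \<in> X \<union> C2" using hx h2(2) by blast
    ultimately show "?h3 x = h x" using inv_into_f_eq[OF h2inj] by blast
  qed
  have "C \<subseteq> D2"
  proof
    fix c assume c: "c \<in> C"
    have hc: "h c \<in> D" using c I'(7) by blast
    have "h2 (h c) = c" using h2(3) hc inv_into_f_f[OF hinj] c by simp
    moreover have "h c \<in> C2" using hc h2(2) by blast
    ultimately have "c \<in> h2 ` C2" by (metis imageI)
    thus "c \<in> D2" using I2(7) by simp
  qed
  thus ?thesis using I4 ext h2(2) by blast
qed

lemma step_both:
  assumes I: "Inv g h C D" and m: "m \<in> M"
  shows "\<exists>h' C' D'. Inv g h' C' D' \<and> C \<subseteq> C' \<and> D \<subseteq> D' \<and> m \<in> C' \<and> m \<in> D' \<and> (\<forall>x\<in>X \<union> C. h' x = h x)"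
proof -
  obtain h1 C1 D1 where h1: "Inv g h1 C1 D1" "insert m C \<subseteq> C1" "\<forall>x\<in>X \<union> C. h1 x = h x"
    using step_forth[OF I m] by blast
  have "D \<subseteq> D1"
  proof -
    have "D = h ` C" using InvD(7)[OF I] by simp
    also have "\<dots> = h1 ` C" using h1(3) by (auto intro!: image_cong)
    also have "\<dots> \<subseteq> h1 ` C1" using h1(2) by blast
    also have "\<dots> = D1" using InvD(7)[OF h1(1)] .
    finally show ?thesis .
  qed
  obtain h2 C2 D2 where h2: "Inv g h2 C2 D2" "C1 \<subseteq> C2" "insert m D1 \<subseteq> D2" "\<forall>x\<in>X \<union> C1. h2 x = h1 x"
    using step_back[OF h1(1) m] by blast
  have "\<forall>x\<in>X \<union> C. h2 x = h x" using h1(2,3) h2(4) by auto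
  moreover have "C \<subseteq> C2" "m \<in> C2" "D \<subseteq> D2" "m \<in> D2" using h1(2) h2(2,3) \<open>D \<subseteq> D1\<close> by auto
  ultimately show ?thesis using h2(1) by blast
qed

end

context gcx begin

lemma main:
  assumes g: "automorphism E X g"
  shows "\<exists>\<gamma>. automorphism E M \<gamma> \<and> (\<forall>x\<in>X. \<gamma> x = g x)"
proof (cases "M = {}")
  case True
  hence "X = {}" using X_sub by blast
  moreover have "automorphism E M id" unfolding automorphism_def partial_iso_def using True by simp
  ultimately show ?thesis by blast
next
  case Mne: False
  define e where "e = from_nat_into M"
  have eM: "\<And>n. e n \<in> M" using from_nat_into[OF Mne] unfolding e_def by blast
  have esurj: "\<And>x. x \<in> M \<Longrightarrow> \<exists>n. e n = x" using from_nat_into_surj[OF countM] unfolding e_def by blast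
  define R where "R = (\<lambda>n (s::('a \<Rightarrow> 'a) \<times> 'a set \<times> 'a set) (s'::('a \<Rightarrow> 'a) \<times> 'a set \<times> 'a set).
     Inv g (fst s') (fst (snd s')) (snd (snd s')) \<and> fst (snd s) \<subseteq> fst (snd s') \<and> snd (snd s) \<subseteq> snd (snd s')
     \<and> e n \<in> fst (snd s') \<and> e n \<in> snd (snd s') \<and> (\<forall>x\<in>X \<union> fst (snd s). fst s' x = fst s x))"
  define S where "S = rec_nat (g, {}, {}) (\<lambda>n s. SOME s'. R n s s')"
  have S0: "S 0 = (g, {}, {})" unfolding S_def by simp
  have SS: "\<And>n. S (Suc n) = (SOME s'. R n (S n) s')" unfolding S_def by simp
  define H where "H = (\<lambda>n. fst (S n))"
  define Cs where "Cs = (\<lambda>n. fst (snd (S n)))"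
  define Ds where "Ds = (\<lambda>n. snd (snd (S n)))"
  have inv0: "Inv g g {} {}"
    unfolding Inv_def using g good_empty autX_props[OF g] by simp
  have RS: "\<And>n. Inv g (H n) (Cs n) (Ds n) \<and> R n (S n) (S (Suc n))"
  proof -
    fix n show "Inv g (H n) (Cs n) (Ds n) \<and> R n (S n) (S (Suc n))"
    proof (induction n)
      case 0
      have I: "Inv g (H 0) (Cs 0) (Ds 0)" using inv0 S0 unfolding H_def Cs_def Ds_def by simp
      then obtain h' C' D' where "Inv g h' C' D' \<and> Cs 0 \<subseteq> C' \<and> Ds 0 \<subseteq> D' \<and> e 0 \<in> C' \<and> e 0 \<in> D' \<and> (\<forall>x\<in>X \<union> Cs 0. h' x = H 0 x)"
        using step_both[OF I eM] by blast
      hence "R 0 (S 0) (h', C', D')" unfolding R_def H_def Cs_def Ds_def by simp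
      hence "R 0 (S 0) (S (Suc 0))" unfolding SS by (rule someI)
      thus ?case using I by blast
    next
      case (Suc n)
      have I: "Inv g (H (Suc n)) (Cs (Suc n)) (Ds (Suc n))"
        using Suc unfolding R_def H_def Cs_def Ds_def by simp
      then obtain h' C' D' where "Inv g h' C' D' \<and> Cs (Suc n) \<subseteq> C' \<and> Ds (Suc n) \<subseteq> D' \<and> e (Suc n) \<in> C' \<and> e (Suc n) \<in> D' \<and> (\<forall>x\<in>X \<union> Cs (Suc n). h' x = H (Suc n) x)"
        using step_both[OF I eM] by blast
      hence "R (Suc n) (S (Suc n)) (h', C', D')" unfolding R_def H_def Cs_def Ds_def by simp
      hence "R (Suc n) (S (Suc n)) (S (Suc (Suc n)))" unfolding SS[of "Suc n"] by (rule someI)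
      thus ?case using I by blast
    qed
  qed
  have Inv_n: "\<And>n. Inv g (H n) (Cs n) (Ds n)" using RS by blast
  have Rn: "\<And>n. Cs n \<subseteq> Cs (Suc n) \<and> Ds n \<subseteq> Ds (Suc n) \<and> e n \<in> Cs (Suc n) \<and> e n \<in> Ds (Suc n)
     \<and> (\<forall>x\<in>X \<union> Cs n. H (Suc n) x = H n x)"
    using RS unfolding R_def H_def Cs_def Ds_def by blast
  have mono: "\<And>n n'. n \<le> n' \<Longrightarrow> Cs n \<subseteq> Cs n' \<and> (\<forall>x\<in>X \<union> Cs n. H n' x = H n x)"
  proof -
    fix n n' :: nat assume "n \<le> n'"
    thus "Cs n \<subseteq> Cs n' \<and> (\<forall>x\<in>X \<union> Cs n. H n' x = H n x)"
    proof (induction n' rule: dec_induct)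
      case base thus ?case by simp
    next
      case (step q)
      have a: "Cs n \<subseteq> Cs q" "\<forall>x\<in>X \<union> Cs n. H q x = H n x" using step.IH by auto
      have b: "Cs q \<subseteq> Cs (Suc q)" "\<forall>x\<in>X \<union> Cs q. H (Suc q) x = H q x" using Rn[of q] by auto
      have "\<forall>x\<in>X \<union> Cs n. H (Suc q) x = H n x"
      proof
        fix x assume x: "x \<in> X \<union> Cs n"
        hence "x \<in> X \<union> Cs q" using a by blast
        thus "H (Suc q) x = H n x" using a b x by simp
      qed
      thus ?case using a b by blast
    qed
  qed
  define N where "N = (\<lambda>x. SOME n. x \<in> X \<union> Cs n)"
  define \<gamma> where "\<gamma> = (\<lambda>x. H (N x) x)"
  have gam: "\<And>x n. x \<in> X \<union> Cs n \<Longrightarrow> \<gamma> x = H n x"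
  proof -
    fix x n assume x: "x \<in> X \<union> Cs n"
    hence xN: "x \<in> X \<union> Cs (N x)" unfolding N_def by (rule someI)
    have "H (max n (N x)) x = H (N x) x" using mono[of "N x" "max n (N x)"] xN by simp
    moreover have "H (max n (N x)) x = H n x" using mono[of n "max n (N x)"] x by simp
    ultimately show "\<gamma> x = H n x" unfolding \<gamma>_def by simp
  qed
  have cover: "\<And>x. x \<in> M \<Longrightarrow> \<exists>n. x \<in> Cs n"
  proof -
    fix x assume "x \<in> M"
    then obtain j where "e j = x" using esurj by blast
    thus "\<exists>n. x \<in> Cs n" using Rn[of j] by blast
  qed
  have cover2: "\<And>x y. x \<in> M \<Longrightarrow> y \<in> M \<Longrightarrow> \<exists>n. x \<in> Cs n \<and> y \<in> Cs n"
  proof -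
    fix x y assume "x \<in> M" "y \<in> M"
    then obtain n1 n2 where "x \<in> Cs n1" "y \<in> Cs n2" using cover by blast
    thus "\<exists>n. x \<in> Cs n \<and> y \<in> Cs n" using mono[of n1 "max n1 n2"] mono[of n2 "max n1 n2"] by auto
  qed
  have DsM: "\<And>n. Ds n \<subseteq> M" using Inv_n goodD(2) InvD(3) by blast
  have CsM: "\<And>n. Cs n \<subseteq> M" using Inv_n goodD(2) InvD(2) by blast
  have inj: "inj_on \<gamma> M"
  proof (rule inj_onI)
    fix x y assume x: "x \<in> M" and y: "y \<in> M" and eq: "\<gamma> x = \<gamma> y"
    obtain n where n: "x \<in> Cs n" "y \<in> Cs n" using cover2[OF x y] by blast
    have "\<gamma> x = H n x" "\<gamma> y = H n y" using gam n by blast+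
    hence "H n x = H n y" using eq by simp
    moreover have "inj_on (H n) (X \<union> Cs n)" using InvD(5)[OF Inv_n[of n]] by (rule bij_betw_imp_inj_on)
    ultimately show "x = y" using n by (meson UnCI inj_onD)
  qed
  have img: "\<gamma> ` M = M"
  proof
    show "\<gamma> ` M \<subseteq> M"
    proof
      fix z assume "z \<in> \<gamma> ` M"
      then obtain x where x: "x \<in> M" "z = \<gamma> x" by blast
      obtain n where n: "x \<in> Cs n" using cover[OF x(1)] by blast
      have "H n ` (X \<union> Cs n) = X \<union> Ds n" using InvD(5)[OF Inv_n[of n]] by (rule bij_betw_imp_surj_on)
      hence "H n x \<in> X \<union> Ds n" using n by blast
      moreover have "z = H n x" using x gam[of x n] n by blast
      ultimately show "z \<in> M" using X_sub DsM by blast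
    qed
    show "M \<subseteq> \<gamma> ` M"
    proof
      fix y assume y: "y \<in> M"
      then obtain j where "e j = y" using esurj by blast
      hence "y \<in> Ds (Suc j)" using Rn[of j] by blast
      hence "y \<in> H (Suc j) ` Cs (Suc j)" using InvD(7)[OF Inv_n[of "Suc j"]] by simp
      then obtain c where c: "c \<in> Cs (Suc j)" "y = H (Suc j) c" by blast
      hence "\<gamma> c = y" using gam[of c "Suc j"] by blast
      moreover have "c \<in> M" using c CsM by blast
      ultimately show "y \<in> \<gamma> ` M" by blast
    qed
  qed
  have edges: "\<forall>x\<in>M. \<forall>y\<in>M. E x y \<longleftrightarrow> E (\<gamma> x) (\<gamma> y)"
  proof (intro ballI)
    fix x y assume x: "x \<in> M" and y: "y \<in> M"
    obtain n where n: "x \<in> Cs n" "y \<in> Cs n" using cover2[OF x y] by blast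
    have "E x y \<longleftrightarrow> E (H n x) (H n y)" using InvD(6)[OF Inv_n[of n]] n by blast
    moreover have "\<gamma> x = H n x" "\<gamma> y = H n y" using gam n by blast+
    ultimately show "E x y \<longleftrightarrow> E (\<gamma> x) (\<gamma> y)" by simp
  qed
  have "automorphism E M \<gamma>" unfolding automorphism_def partial_iso_def bij_betw_def
    using inj img edges by blast
  moreover have "\<forall>x\<in>X. \<gamma> x = g x"
  proof
    fix x assume "x \<in> X"
    hence "\<gamma> x = H 0 x" using gam by blast
    thus "\<gamma> x = g x" using S0 unfolding H_def by simp
  qed
  ultimately show ?thesis by blast
qed

end

theorem lemma9:
  fixes mm :: nat and M :: "'a set" and E :: "'a \<Rightarrow> 'a \<Rightarrow> bool"
    and A X :: "'a set" and g :: "'a \<Rightarrow> 'a"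
  assumes "mm \<ge> 2"
    and "generic mm M E"
    and "A \<subseteq> M" and "finite A"
    and "X = gcl mm M E A"
    and "automorphism E X g"
  shows "\<exists>\<gamma>. automorphism E M \<gamma> \<and> (\<forall>x\<in>X. \<gamma> x = g x)"
proof -
  interpret gcx mm M E A
    by (unfold_locales) (use assms in auto)
  have "X = gcx.X mm M E A" using assms(5) X_def by simp
  thus ?thesis using main assms(6) by simp
qed

end
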